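(* Let $L_1,\dots,L_n$ be directed lines in $\mathbb{R}^3$ such that no two of them are coplanar, and suppose $d(L_i,L_j)=1$ for all $1\le i<j\le n$, where $d(L,L')=\min_{x\in L,\,y\in L'}\|x-y\|$. Then there do not exist five distinct indices $i_1,\dots,i_5\in\{1,\dots,n\}$ such that the chiralities $\varepsilon(L_{i_a},L_{i_b})$, $1\le a<b\le 5$, are all equal (i.e. all $+1$ or all $-1$). Equivalently, the chirality graph of $\{L_1,\dots,L_n\}$ contains no monochromatic $K_5$.
   Context: A directed line in $\mathbb{R}^3$ is a set $L=\mathbb{R}v+w$ with a chosen unit vector $v\in\mathbb{R}^3$ (its direction) and some $w\in\mathbb{R}^3$ (determined modulo $\mathbb{R}v$). For two directed lines $L=\mathbb{R}v+w$, $L'=\mathbb{R}v'+w'$ that are not coplanar (i.e. skew), their chirality is $\varepsilon(L,L')=\operatorname{sgn}\langle v\times v',\,w-w'\rangle\in\{\pm1\}$, where $\langle\cdot,\cdot\rangle$ is the standard inner product and $\times$ the cross product; this is independent of the choices of $w,w'$ and symmetric in $L,L'$. The chirality graph of $\{L_1,\dots,L_n\}$ (pairwise non-coplanar directed lines) is the complete graph on $\{1,\dots,n\}$ with edge $\{i,j\}$ labelled by the sign $\varepsilon(L_i,L_j)$; a monochromatic $K_5$ is a set of 5 vertices all of whose 10 edges carry the same sign. *)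

theory Defs
  imports "HOL-Analysis.Analysis" "HOL-Analysis.Cross3"
begin

text \<open>A directed line is represented by a pair (v, w) of a direction v (required to be a unit
vector) and a base point w; the underlying point set is {w + t v | t real}.\<close>

type_synonym dline = "(real^3) \<times> (real^3)"

definition is_dline :: "dline \<Rightarrow> bool" where
  "is_dline L \<longleftrightarrow> norm (fst L) = 1"

definition line_points :: "dline \<Rightarrow> (real^3) set" where
  "line_points L = {snd L + t *\<^sub>R fst L | t. True}"

definition coplanar_lines :: "dline \<Rightarrow> dline \<Rightarrow> bool" where
  "coplanar_lines L L' \<longleftrightarrow>
     (\<exists>nv :: real^3. \<exists>c. nv \<noteq> 0 \<and> (\<forall>x \<in> line_points L \<union> line_points L'. nv \<bullet> x = c))"

definition line_dist :: "dline \<Rightarrow> dline \<Rightarrow> real" where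
  "line_dist L L' = Inf {norm (x - y) | x y. x \<in> line_points L \<and> y \<in> line_points L'}"

definition chirality :: "dline \<Rightarrow> dline \<Rightarrow> real" where
  "chirality L L' = sgn ((cross3 (fst L) (fst L')) \<bullet> (snd L - snd L'))"

end

theory Submission
  imports Defs
begin

definition det3 :: "real^3 \<Rightarrow> real^3 \<Rightarrow> real^3 \<Rightarrow> real" where
  "det3 a b c = cross3 a b \<bullet> c"

lemma gp4: "det3 b c d *\<^sub>R a - det3 a c d *\<^sub>R b + det3 a b d *\<^sub>R c - det3 a b c *\<^sub>R d = 0"
  unfolding det3_def by (simp add: cross3_simps forall_3) 

lemma E_split: "cross3 v v' \<bullet> (w - w') = cross3 w v \<bullet> v' + cross3 w' v' \<bullet> v"
  by (simp add: cross3_simps)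

lemma tri_eq_coef:
  fixes p q :: "real^3"
  assumes "norm (p + q) = norm p + norm q" "p \<noteq> 0"
  shows "\<exists>c\<ge>0. q = c *\<^sub>R p"
proof -
  have "norm p *\<^sub>R q = norm q *\<^sub>R p" using assms(1) norm_triangle_eq by blast
  then have "q = (norm q / norm p) *\<^sub>R p" using assms(2)
    by (metis (no_types, lifting) divide_inverse_commute norm_eq_zero scaleR_scaleR
        inverse_eq_divide right_inverse scaleR_one mult.commute)
  thus ?thesis by (intro exI[of _ "norm q / norm p"]) auto
qed

lemma two_two:
  fixes x1 x2 x3 x4 :: "real^3"
  assumes eq: "x1 + x2 = x3 + x4" and n13: "cross3 x1 x3 \<noteq> 0" and n23: "cross3 x2 x3 \<noteq> 0"
  shows "norm (cross3 x1 x2) + norm (cross3 x3 x4) < norm (cross3 x1 x3) + norm (cross3 x1 x4) + norm (cross3 x2 x3) + norm (cross3 x2 x4)"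
proof -
  have x2: "x2 = x3 + x4 - x1" using eq by (simp add: algebra_simps)
  have a1: "cross3 x1 x2 = cross3 x1 x3 + cross3 x1 x4"
    by (simp add: x2 cross3_simps)
  have a2: "- cross3 x1 x2 = cross3 x2 x3 + cross3 x2 x4"
    by (simp add: x2 cross3_simps)
  have a3: "cross3 x3 x4 = cross3 x3 x1 + cross3 x3 x2"
    by (simp add: x2 cross3_simps)
  have a4: "- cross3 x3 x4 = cross3 x4 x1 + cross3 x4 x2"
    by (simp add: x2 cross3_simps)
  have s31: "norm (cross3 x3 x1) = norm (cross3 x1 x3)" by (metis cross_skew norm_minus_cancel)
  have s32: "norm (cross3 x3 x2) = norm (cross3 x2 x3)" by (metis cross_skew norm_minus_cancel)
  have s41: "norm (cross3 x4 x1) = norm (cross3 x1 x4)" by (metis cross_skew norm_minus_cancel)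
  have s42: "norm (cross3 x4 x2) = norm (cross3 x2 x4)" by (metis cross_skew norm_minus_cancel)
  have t1: "norm (cross3 x1 x2) \<le> norm (cross3 x1 x3) + norm (cross3 x1 x4)"
    using a1 norm_triangle_ineq by metis
  have t2: "norm (cross3 x1 x2) \<le> norm (cross3 x2 x3) + norm (cross3 x2 x4)"
    using a2 norm_triangle_ineq norm_minus_cancel by metis
  have t3: "norm (cross3 x3 x4) \<le> norm (cross3 x3 x1) + norm (cross3 x3 x2)"
    using a3 norm_triangle_ineq by metis
  have t4: "norm (cross3 x3 x4) \<le> norm (cross3 x4 x1) + norm (cross3 x4 x2)"
    using a4 norm_triangle_ineq norm_minus_cancel by metis
  show ?thesis
  proof (rule ccontr)
    assume "\<not> ?thesis"
    then have q: "norm (cross3 x1 x3) + norm (cross3 x1 x4) + norm (cross3 x2 x3) + norm (cross3 x2 x4) \<le> norm (cross3 x1 x2) + norm (cross3 x3 x4)" by linarith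
    have q1: "norm (cross3 x1 x2) = norm (cross3 x1 x3) + norm (cross3 x1 x4)"
      using q t1 t2 t3 t4 s31 s32 s41 s42 by linarith
    have q2: "norm (cross3 x1 x2) = norm (cross3 x2 x3) + norm (cross3 x2 x4)"
      using q t1 t2 t3 t4 s31 s32 s41 s42 by linarith
    have q3: "norm (cross3 x3 x4) = norm (cross3 x3 x1) + norm (cross3 x3 x2)"
      using q t1 t2 t3 t4 s31 s32 s41 s42 by linarith
    have e1: "norm (cross3 x1 x3 + cross3 x1 x4) = norm (cross3 x1 x3) + norm (cross3 x1 x4)"
      using q1 a1 by simp
    have e2: "norm (cross3 x2 x3 + cross3 x2 x4) = norm (cross3 x2 x3) + norm (cross3 x2 x4)"
      using q2 a2 by (metis norm_minus_cancel)
    have e3: "norm (cross3 x3 x1 + cross3 x3 x2) = norm (cross3 x3 x1) + norm (cross3 x3 x2)"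
      using q3 a3 by (metis norm_minus_cancel)
    define n where "n = cross3 x1 x3"
    have n0: "n \<noteq> 0" using n13 n_def by simp
    have n31: "cross3 x3 x1 = - n" unfolding n_def by (metis cross_skew)
    obtain c where c: "c \<ge> 0" "cross3 x1 x4 = c *\<^sub>R n"
      using tri_eq_coef[OF e1] n13 n_def by blast
    obtain d where d: "d \<ge> 0" "cross3 x3 x2 = d *\<^sub>R cross3 x3 x1"
      using tri_eq_coef[OF e3] n31 n0 by fastforce
    obtain e where e: "e \<ge> 0" "cross3 x2 x4 = e *\<^sub>R cross3 x2 x3"
      using tri_eq_coef[OF e2] n23 by blast
    have id1: "cross3 x3 x2 = cross3 x3 x4 + n" by (simp add: x2 n_def cross3_simps)
    have id2: "cross3 x2 x3 = - cross3 x3 x2" by (metis cross_skew)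
    have id3: "cross3 x2 x4 = cross3 x3 x4 - cross3 x1 x4" by (simp add: x2 cross3_simps)
    have "cross3 x3 x4 = cross3 x3 x2 - n" using id1 by simp
    also have "\<dots> = - (d + 1) *\<^sub>R n" using d(2) n31 by (simp add: algebra_simps)
    finally have h34: "cross3 x3 x4 = - (d + 1) *\<^sub>R n" .
    have h23: "cross3 x2 x3 = d *\<^sub>R n" using id2 d(2) n31 by simp
    have "- (d + 1) *\<^sub>R n - c *\<^sub>R n = (e * d) *\<^sub>R n"
      using id3 h34 c(2) e(2) h23 by simp
    then have "(e * d) *\<^sub>R n - (- (d + 1) *\<^sub>R n - c *\<^sub>R n) = 0" by simp
    moreover have "(1 + c + d + e * d) *\<^sub>R n = (e * d) *\<^sub>R n - (- (d + 1) *\<^sub>R n - c *\<^sub>R n)"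
      by (simp add: algebra_simps)
    ultimately have "(1 + c + d + e * d) *\<^sub>R n = 0" by simp
    moreover have "1 + c + d + e * d > 0" using c d e by (simp add: add_pos_nonneg)
    ultimately show False using n0 by simp
  qed
qed

lemma nc_sym: "norm (cross3 y x) = norm (cross3 x y)"
  by (metis cross_skew norm_minus_cancel)

lemma ncs: "norm (cross3 (a *\<^sub>R x) (b *\<^sub>R y)) = \<bar>a\<bar> * \<bar>b\<bar> * norm (cross3 x y)"
  by (simp add: cross_mult_left cross_mult_right abs_mult)

lemma Nprime:
  fixes v1 v2 v3 v4 :: "real^3"
  assumes a: "a1 > 0" "a2 > 0" "a3 > 0" "a4 > 0"
    and eq: "a1 *\<^sub>R v1 + a2 *\<^sub>R v2 = a3 *\<^sub>R v3 + a4 *\<^sub>R v4"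
    and n13: "cross3 v1 v3 \<noteq> 0" and n23: "cross3 v2 v3 \<noteq> 0"
  shows "a1*a2*norm (cross3 v1 v2) + a3*a4*norm (cross3 v3 v4) <
     a1*a3*norm (cross3 v1 v3) + a1*a4*norm (cross3 v1 v4) + a2*a3*norm (cross3 v2 v3) + a2*a4*norm (cross3 v2 v4)"
proof -
  have "cross3 (a1 *\<^sub>R v1) (a3 *\<^sub>R v3) \<noteq> 0" using a n13 by (simp add: cross_mult_left cross_mult_right)
  moreover have "cross3 (a2 *\<^sub>R v2) (a3 *\<^sub>R v3) \<noteq> 0" using a n23 by (simp add: cross_mult_left cross_mult_right)
  ultimately have "norm (cross3 (a1 *\<^sub>R v1) (a2 *\<^sub>R v2)) + norm (cross3 (a3 *\<^sub>R v3) (a4 *\<^sub>R v4)) <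
    norm (cross3 (a1 *\<^sub>R v1) (a3 *\<^sub>R v3)) + norm (cross3 (a1 *\<^sub>R v1) (a4 *\<^sub>R v4)) +
    norm (cross3 (a2 *\<^sub>R v2) (a3 *\<^sub>R v3)) + norm (cross3 (a2 *\<^sub>R v2) (a4 *\<^sub>R v4))"
    using two_two[OF eq] by blast
  thus ?thesis unfolding ncs using a by simp
qed

lemma F4pos:
  fixes v1 v2 v3 v4 :: "real^3"
  assumes dep: "k1 *\<^sub>R v1 + k2 *\<^sub>R v2 + k3 *\<^sub>R v3 + k4 *\<^sub>R v4 = 0"
    and n12: "cross3 v1 v2 \<noteq> 0" and n13: "cross3 v1 v3 \<noteq> 0" and n14: "cross3 v1 v4 \<noteq> 0"
    and n23: "cross3 v2 v3 \<noteq> 0" and n24: "cross3 v2 v4 \<noteq> 0" and n34: "cross3 v3 v4 \<noteq> 0"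
    and prod: "k1*k2*k3*k4 > 0" and k1: "k1 > 0"
  shows "k1*k2*norm (cross3 v1 v2) + k1*k3*norm (cross3 v1 v3) + k1*k4*norm (cross3 v1 v4)
       + k2*k3*norm (cross3 v2 v3) + k2*k4*norm (cross3 v2 v4) + k3*k4*norm (cross3 v3 v4) \<noteq> 0"
proof -
  have p: "norm (cross3 v1 v2) > 0" "norm (cross3 v1 v3) > 0" "norm (cross3 v1 v4) > 0"
     "norm (cross3 v2 v3) > 0" "norm (cross3 v2 v4) > 0" "norm (cross3 v3 v4) > 0"
    using n12 n13 n14 n23 n24 n34 by auto
  have p234: "k2*k3*k4 > 0" using prod k1
    by (metis mult.assoc zero_less_mult_pos)
  have nz: "k2 \<noteq> 0" "k3 \<noteq> 0" "k4 \<noteq> 0" using p234 by auto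
  consider "k2 > 0" "k3 > 0" "k4 > 0" | "k2 > 0" "k3 < 0" "k4 < 0" | "k2 < 0" "k3 > 0" "k4 < 0"
    | "k2 < 0" "k3 < 0" "k4 > 0"
  proof -
    { assume "k2 > 0" "k3 > 0" "k4 < 0" then have False using p234
        by (metis mult_pos_pos mult_pos_neg not_less_iff_gr_or_eq) }
    moreover { assume "k2 > 0" "k3 < 0" "k4 > 0" then have False using p234
        by (metis mult_pos_neg mult_neg_pos not_less_iff_gr_or_eq) }
    moreover { assume "k2 < 0" "k3 > 0" "k4 > 0" then have False using p234
        by (metis mult_neg_pos mult_pos_pos mult.assoc not_less_iff_gr_or_eq) }
    moreover { assume "k2 < 0" "k3 < 0" "k4 < 0" then have False using p234
        by (metis mult_neg_neg mult_pos_neg not_less_iff_gr_or_eq) }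
    ultimately show ?thesis using that nz by (meson linorder_neqE_linordered_idom)
  qed
  then show ?thesis
  proof cases
    case 1
    have "k1*k2*norm (cross3 v1 v2) > 0" "k1*k3*norm (cross3 v1 v3) > 0" "k1*k4*norm (cross3 v1 v4) > 0"
      "k2*k3*norm (cross3 v2 v3) > 0" "k2*k4*norm (cross3 v2 v4) > 0" "k3*k4*norm (cross3 v3 v4) > 0"
      using p k1 1 by simp_all
    then show ?thesis by linarith
  next
    case 2
    have eq: "k1 *\<^sub>R v1 + k2 *\<^sub>R v2 = (-k3) *\<^sub>R v3 + (-k4) *\<^sub>R v4" using dep
      by (simp add: algebra_simps eq_neg_iff_add_eq_0)
    show ?thesis using Nprime[OF k1 2(1) _ _ eq n13 n23] 2 by simp
  next
    case 3
    have "k1 *\<^sub>R v1 + k3 *\<^sub>R v3 - ((-k2) *\<^sub>R v2 + (-k4) *\<^sub>R v4) = k1 *\<^sub>R v1 + k2 *\<^sub>R v2 + k3 *\<^sub>R v3 + k4 *\<^sub>R v4"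
      by (simp add: algebra_simps)
    then have eq: "k1 *\<^sub>R v1 + k3 *\<^sub>R v3 = (-k2) *\<^sub>R v2 + (-k4) *\<^sub>R v4" using dep
      by (simp only: right_minus_eq)
    have "cross3 v3 v2 \<noteq> 0" using n23 by (metis cross_skew neg_0_equal_iff_equal)
    from Nprime[OF k1 3(2) _ _ eq n12 this] 3
    have H: "k1 * k3 * norm (cross3 v1 v3) + (- k2) * (- k4) * norm (cross3 v2 v4)
      < k1 * (- k2) * norm (cross3 v1 v2) + k1 * (- k4) * norm (cross3 v1 v4) +
        k3 * (- k2) * norm (cross3 v3 v2) + k3 * (- k4) * norm (cross3 v3 v4)" by simp
    have s: "norm (cross3 v3 v2) = norm (cross3 v2 v3)" by (rule nc_sym)
    have e1: "k3 * (- k2) * norm (cross3 v3 v2) = - (k2 * k3 * norm (cross3 v2 v3))" by (simp add: s)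
    have e2: "(- k2) * (- k4) * norm (cross3 v2 v4) = k2 * k4 * norm (cross3 v2 v4)" by simp
    have e3: "k1 * (- k2) * norm (cross3 v1 v2) = - (k1 * k2 * norm (cross3 v1 v2))" by simp
    have e4: "k1 * (- k4) * norm (cross3 v1 v4) = - (k1 * k4 * norm (cross3 v1 v4))" by simp
    have e5: "k3 * (- k4) * norm (cross3 v3 v4) = - (k3 * k4 * norm (cross3 v3 v4))" by simp
    show ?thesis using H e1 e2 e3 e4 e5 by linarith
  next
    case 4
    have "k1 *\<^sub>R v1 + k4 *\<^sub>R v4 - ((-k2) *\<^sub>R v2 + (-k3) *\<^sub>R v3) = k1 *\<^sub>R v1 + k2 *\<^sub>R v2 + k3 *\<^sub>R v3 + k4 *\<^sub>R v4"
      by (simp add: algebra_simps)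
    then have eq: "k1 *\<^sub>R v1 + k4 *\<^sub>R v4 = (-k2) *\<^sub>R v2 + (-k3) *\<^sub>R v3" using dep
      by (simp only: right_minus_eq)
    have "cross3 v4 v2 \<noteq> 0" using n24 by (metis cross_skew neg_0_equal_iff_equal)
    from Nprime[OF k1 4(3) _ _ eq n12 this] 4
    have H: "k1 * k4 * norm (cross3 v1 v4) + (- k2) * (- k3) * norm (cross3 v2 v3)
      < k1 * (- k2) * norm (cross3 v1 v2) + k1 * (- k3) * norm (cross3 v1 v3) +
        k4 * (- k2) * norm (cross3 v4 v2) + k4 * (- k3) * norm (cross3 v4 v3)" by simp
    have s1: "norm (cross3 v4 v2) = norm (cross3 v2 v4)" by (rule nc_sym)
    have s2: "norm (cross3 v4 v3) = norm (cross3 v3 v4)" by (rule nc_sym)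
    have e1: "k4 * (- k2) * norm (cross3 v4 v2) = - (k2 * k4 * norm (cross3 v2 v4))" by (simp add: s1)
    have e2: "k4 * (- k3) * norm (cross3 v4 v3) = - (k3 * k4 * norm (cross3 v3 v4))" by (simp add: s2)
    have e3: "(- k2) * (- k3) * norm (cross3 v2 v3) = k2 * k3 * norm (cross3 v2 v3)" by simp
    have e4: "k1 * (- k2) * norm (cross3 v1 v2) = - (k1 * k2 * norm (cross3 v1 v2))" by simp
    have e5: "k1 * (- k3) * norm (cross3 v1 v3) = - (k1 * k3 * norm (cross3 v1 v3))" by simp
    show ?thesis using H e1 e2 e3 e4 e5 by linarith
  qed
qed

lemma F4:
  fixes v1 v2 v3 v4 :: "real^3"
  assumes dep: "k1 *\<^sub>R v1 + k2 *\<^sub>R v2 + k3 *\<^sub>R v3 + k4 *\<^sub>R v4 = 0"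
    and n12: "cross3 v1 v2 \<noteq> 0" and n13: "cross3 v1 v3 \<noteq> 0" and n14: "cross3 v1 v4 \<noteq> 0"
    and n23: "cross3 v2 v3 \<noteq> 0" and n24: "cross3 v2 v4 \<noteq> 0" and n34: "cross3 v3 v4 \<noteq> 0"
    and prod: "k1*k2*k3*k4 > 0"
  shows "k1*k2*norm (cross3 v1 v2) + k1*k3*norm (cross3 v1 v3) + k1*k4*norm (cross3 v1 v4)
       + k2*k3*norm (cross3 v2 v3) + k2*k4*norm (cross3 v2 v4) + k3*k4*norm (cross3 v3 v4) \<noteq> 0"
proof (cases "k1 > 0")
  case True
  then show ?thesis using F4pos[OF dep n12 n13 n14 n23 n24 n34 prod] by blast
next
  case False
  have "k1 \<noteq> 0" using prod by auto
  with False have k1: "-k1 > 0" by simp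
  have dep': "(-k1) *\<^sub>R v1 + (-k2) *\<^sub>R v2 + (-k3) *\<^sub>R v3 + (-k4) *\<^sub>R v4 = 0"
  proof -
    have "(-k1) *\<^sub>R v1 + (-k2) *\<^sub>R v2 + (-k3) *\<^sub>R v3 + (-k4) *\<^sub>R v4 = - (k1 *\<^sub>R v1 + k2 *\<^sub>R v2 + k3 *\<^sub>R v3 + k4 *\<^sub>R v4)"
      by (simp add: algebra_simps)
    then show ?thesis using dep by simp
  qed
  have prod': "(-k1)*(-k2)*(-k3)*(-k4) > 0" using prod by simp
  show ?thesis using F4pos[OF dep' n12 n13 n14 n23 n24 n34 prod' k1] by simp
qed

lemma three_pm: "\<bar>A\<bar> = P \<Longrightarrow> \<bar>B\<bar> = P \<Longrightarrow> \<bar>C\<bar> = P \<Longrightarrow> P > 0 \<Longrightarrow> A + B + C \<noteq> (0::real)"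
  by (cases "A \<ge> 0"; cases "B \<ge> 0"; cases "C \<ge> 0") (simp_all add: abs_if)

lemma F3:
  fixes v1 v2 v3 :: "real^3"
  assumes dep: "k1 *\<^sub>R v1 + k2 *\<^sub>R v2 + k3 *\<^sub>R v3 = 0"
    and n12: "cross3 v1 v2 \<noteq> 0" and n13: "cross3 v1 v3 \<noteq> 0" and n23: "cross3 v2 v3 \<noteq> 0"
    and k3: "k3 \<noteq> 0"
  shows "k1*k2*norm (cross3 v1 v2) + k1*k3*norm (cross3 v1 v3) + k2*k3*norm (cross3 v2 v3) \<noteq> 0"
proof -
  have k1: "k1 \<noteq> 0"
  proof
    assume "k1 = 0"
    then have "k2 *\<^sub>R v2 + k3 *\<^sub>R v3 = 0" using dep by simp
    then have "cross3 v2 (k2 *\<^sub>R v2 + k3 *\<^sub>R v3) = 0" by simp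
    then have "k3 *\<^sub>R cross3 v2 v3 = 0" by (simp add: cross_add_right cross_mult_right)
    with k3 n23 show False by simp
  qed
  have k2: "k2 \<noteq> 0"
  proof
    assume "k2 = 0"
    then have "k1 *\<^sub>R v1 + k3 *\<^sub>R v3 = 0" using dep by simp
    then have "cross3 v1 (k1 *\<^sub>R v1 + k3 *\<^sub>R v3) = 0" by simp
    then have "k3 *\<^sub>R cross3 v1 v3 = 0" by (simp add: cross_add_right cross_mult_right)
    with k3 n13 show False by simp
  qed
  define x1 where "x1 = k1 *\<^sub>R v1"
  define x2 where "x2 = k2 *\<^sub>R v2"
  have x3: "k3 *\<^sub>R v3 = - (x1 + x2)" using dep unfolding x1_def x2_def
    by (simp add: algebra_simps eq_neg_iff_add_eq_0)
  define P where "P = norm (cross3 x1 x2)"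
  have P: "P > 0" unfolding P_def x1_def x2_def using k1 k2 n12
    by (simp add: cross_mult_left cross_mult_right)
  have A: "\<bar>k1*k2*norm (cross3 v1 v2)\<bar> = P" unfolding P_def x1_def x2_def ncs by (simp add: abs_mult)
  have "cross3 x1 (- (x1 + x2)) = - cross3 x1 x2" by (simp add: cross3_simps)
  then have "norm (cross3 x1 (k3 *\<^sub>R v3)) = P" unfolding x3 P_def by (metis norm_minus_cancel)
  then have B: "\<bar>k1*k3*norm (cross3 v1 v3)\<bar> = P" unfolding x1_def ncs by (simp add: abs_mult)
  have "cross3 x2 (- (x1 + x2)) = - cross3 x2 x1" by (simp add: cross3_simps)
  then have "norm (cross3 x2 (k3 *\<^sub>R v3)) = P" unfolding x3 P_def by (metis norm_minus_cancel nc_sym)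
  then have C: "\<bar>k2*k3*norm (cross3 v2 v3)\<bar> = P" unfolding x2_def ncs by (simp add: abs_mult)
  show ?thesis using three_pm[OF A B C P] .
qed

lemma plucker:
  fixes v1 v2 v3 v4 w1 w2 w3 w4 :: "real^3"
  assumes dep: "k1 *\<^sub>R v1 + k2 *\<^sub>R v2 + k3 *\<^sub>R v3 + k4 *\<^sub>R v4 = 0"
  shows "k1*k2*(cross3 v1 v2 \<bullet> (w1 - w2)) + k1*k3*(cross3 v1 v3 \<bullet> (w1 - w3))
    + k1*k4*(cross3 v1 v4 \<bullet> (w1 - w4)) + k2*k3*(cross3 v2 v3 \<bullet> (w2 - w3))
    + k2*k4*(cross3 v2 v4 \<bullet> (w2 - w4)) + k3*k4*(cross3 v3 v4 \<bullet> (w3 - w4)) = 0"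
proof -
  define m1 where "m1 = cross3 w1 v1"
  define m2 where "m2 = cross3 w2 v2"
  define m3 where "m3 = cross3 w3 v3"
  define m4 where "m4 = cross3 w4 v4"
  have z: "m1 \<bullet> v1 = 0" "m2 \<bullet> v2 = 0" "m3 \<bullet> v3 = 0" "m4 \<bullet> v4 = 0"
    unfolding m1_def m2_def m3_def m4_def by (simp_all add: dot_cross_self)
  have d1: "k2 *\<^sub>R v2 + k3 *\<^sub>R v3 + k4 *\<^sub>R v4 = - (k1 *\<^sub>R v1)" using dep
    by (simp add: algebra_simps eq_neg_iff_add_eq_0)
  have d2: "k1 *\<^sub>R v1 + k3 *\<^sub>R v3 + k4 *\<^sub>R v4 = - (k2 *\<^sub>R v2)" using dep
    by (simp add: algebra_simps eq_neg_iff_add_eq_0)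
  have d3: "k1 *\<^sub>R v1 + k2 *\<^sub>R v2 + k4 *\<^sub>R v4 = - (k3 *\<^sub>R v3)" using dep
    by (simp add: algebra_simps eq_neg_iff_add_eq_0)
  have d4: "k1 *\<^sub>R v1 + k2 *\<^sub>R v2 + k3 *\<^sub>R v3 = - (k4 *\<^sub>R v4)" using dep
    by (simp add: algebra_simps eq_neg_iff_add_eq_0)
  have h1: "m1 \<bullet> (k2 *\<^sub>R v2 + k3 *\<^sub>R v3 + k4 *\<^sub>R v4) = 0" unfolding d1 using z by simp
  have h2: "m2 \<bullet> (k1 *\<^sub>R v1 + k3 *\<^sub>R v3 + k4 *\<^sub>R v4) = 0" unfolding d2 using z by simp
  have h3: "m3 \<bullet> (k1 *\<^sub>R v1 + k2 *\<^sub>R v2 + k4 *\<^sub>R v4) = 0" unfolding d3 using z by simp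
  have h4: "m4 \<bullet> (k1 *\<^sub>R v1 + k2 *\<^sub>R v2 + k3 *\<^sub>R v3) = 0" unfolding d4 using z by simp
  have "k1*k2*(cross3 v1 v2 \<bullet> (w1 - w2)) + k1*k3*(cross3 v1 v3 \<bullet> (w1 - w3))
    + k1*k4*(cross3 v1 v4 \<bullet> (w1 - w4)) + k2*k3*(cross3 v2 v3 \<bullet> (w2 - w3))
    + k2*k4*(cross3 v2 v4 \<bullet> (w2 - w4)) + k3*k4*(cross3 v3 v4 \<bullet> (w3 - w4))
    = k1 * (m1 \<bullet> (k2 *\<^sub>R v2 + k3 *\<^sub>R v3 + k4 *\<^sub>R v4)) + k2 * (m2 \<bullet> (k1 *\<^sub>R v1 + k3 *\<^sub>R v3 + k4 *\<^sub>R v4))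
    + k3 * (m3 \<bullet> (k1 *\<^sub>R v1 + k2 *\<^sub>R v2 + k4 *\<^sub>R v4)) + k4 * (m4 \<bullet> (k1 *\<^sub>R v1 + k2 *\<^sub>R v2 + k3 *\<^sub>R v3))"
    unfolding E_split m1_def m2_def m3_def m4_def
    by (simp add: inner_add_right inner_scaleR_right algebra_simps)
  also have "\<dots> = 0" using h1 h2 h3 h4 by simp
  finally show ?thesis .
qed

lemma noncop_cross:
  assumes dl: "is_dline L" and nc: "\<not> coplanar_lines L L'"
  shows "cross3 (fst L) (fst L') \<noteq> 0"
proof
  assume c0: "cross3 (fst L) (fst L') = 0"
  obtain v w where L: "L = (v, w)" by (cases L)
  obtain v' w' where L': "L' = (v', w')" by (cases L')
  have nv: "norm v = 1" using dl L by (simp add: is_dline_def)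
  have vv: "v \<bullet> v = 1" using nv by (simp add: dot_square_norm)
  have "cross3 v (cross3 v v') = 0" using c0 L L' by simp
  then have "(v \<bullet> v') *\<^sub>R v - (v \<bullet> v) *\<^sub>R v' = 0" by (simp add: Lagrange)
  then have v': "v' = (v \<bullet> v') *\<^sub>R v" using vv by simp
  have "dim {v, w' - w} \<le> card {v, w' - w}" by (rule dim_le_card) (auto intro: span_base)
  also have "\<dots> \<le> 2" by (simp add: card_insert_le_m1)
  finally have "dim {v, w' - w} < DIM(real^3)" by simp
  then obtain nv :: "real^3" where nv0: "nv \<noteq> 0" and orth: "\<And>y. y \<in> span {v, w' - w} \<Longrightarrow> orthogonal nv y"
    using orthogonal_to_subspace_exists by blast
  have o1: "nv \<bullet> v = 0" using orth[of v] by (simp add: span_base orthogonal_def)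
  have o2: "nv \<bullet> (w' - w) = 0" using orth[of "w' - w"] by (simp add: span_base orthogonal_def)
  have "\<forall>x \<in> line_points L \<union> line_points L'. nv \<bullet> x = nv \<bullet> w"
  proof
    fix x assume "x \<in> line_points L \<union> line_points L'"
    then obtain t where "x = w + t *\<^sub>R v \<or> x = w' + t *\<^sub>R v'" using L L' by (auto simp: line_points_def)
    then show "nv \<bullet> x = nv \<bullet> w"
    proof
      assume "x = w + t *\<^sub>R v" then show ?thesis using o1 by (simp add: inner_add_right)
    next
      assume "x = w' + t *\<^sub>R v'"
      moreover have "t *\<^sub>R v' = (t * (v \<bullet> v')) *\<^sub>R v" by (subst v') simp
      ultimately have "x = w + (w' - w) + (t * (v \<bullet> v')) *\<^sub>R v" by simp
      then show ?thesis using o1 o2 by (simp add: inner_add_right inner_diff_right)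
    qed
  qed
  then have "coplanar_lines L L'" unfolding coplanar_lines_def using nv0 by blast
  with nc show False by simp
qed

lemma line_dist_formula:
  assumes n0: "cross3 (fst L) (fst L') \<noteq> 0"
  shows "line_dist L L' = \<bar>cross3 (fst L) (fst L') \<bullet> (snd L - snd L')\<bar> / norm (cross3 (fst L) (fst L'))"
proof -
  obtain v w where L: "L = (v, w)" by (cases L)
  obtain v' w' where L': "L' = (v', w')" by (cases L')
  define n where "n = cross3 v v'"
  define z where "z = w - w'"
  have n0': "n \<noteq> 0" using n0 L L' n_def by simp
  have np: "norm n > 0" using n0' by simp
  define c where "c = \<bar>n \<bullet> z\<bar> / norm n"
  define M where "M = {norm (x - y) | x y. x \<in> line_points L \<and> y \<in> line_points L'}"
  have low: "c \<le> m" if "m \<in> M" for m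
  proof -
    from that obtain t t' where m: "m = norm ((w + t *\<^sub>R v) - (w' + t' *\<^sub>R v'))"
      unfolding M_def line_points_def L L' by auto
    have "n \<bullet> ((w + t *\<^sub>R v) - (w' + t' *\<^sub>R v')) = n \<bullet> z"
      unfolding n_def z_def by (simp add: inner_add_right inner_diff_right dot_cross_self)
    then have "\<bar>n \<bullet> z\<bar> \<le> norm n * m" using Cauchy_Schwarz_ineq2 m by metis
    then show ?thesis unfolding c_def using np by (simp add: divide_le_eq mult.commute)
  qed
  define N where "N = n \<bullet> n"
  have N: "N > 0" unfolding N_def using n0' by simp
  define t where "t = det3 v' z n / N"
  define t' where "t' = det3 v z n / N"
  have g: "det3 v' z n *\<^sub>R v - det3 v z n *\<^sub>R v' + det3 v v' n *\<^sub>R z - det3 v v' z *\<^sub>R n = 0"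
    by (rule gp4)
  have dn: "det3 v v' n = N" "det3 v v' z = n \<bullet> z" unfolding det3_def N_def n_def by simp_all
  have "N *\<^sub>R (z + t *\<^sub>R v - t' *\<^sub>R v') = N *\<^sub>R z + det3 v' z n *\<^sub>R v - det3 v z n *\<^sub>R v'"
    unfolding t_def t'_def using N by (simp add: algebra_simps)
  also have "\<dots> = (n \<bullet> z) *\<^sub>R n" using g dn by (simp add: algebra_simps)
  finally have "z + t *\<^sub>R v - t' *\<^sub>R v' = ((n \<bullet> z) / N) *\<^sub>R n" using N
    by (metis (no_types, lifting) divide_inverse_commute inverse_eq_divide less_irrefl scaleR_scaleR
        scaleR_one right_inverse mult.commute)
  moreover have "(w + t *\<^sub>R v) - (w' + t' *\<^sub>R v') = z + t *\<^sub>R v - t' *\<^sub>R v'"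
    unfolding z_def by (simp add: algebra_simps)
  ultimately have "norm ((w + t *\<^sub>R v) - (w' + t' *\<^sub>R v')) = \<bar>(n \<bullet> z) / N\<bar> * norm n"
    by simp
  also have "\<dots> = \<bar>n \<bullet> z\<bar> / N * norm n" using N by simp
  also have "\<dots> = c" unfolding c_def N_def using np
    by (simp add: dot_square_norm power2_eq_square)
  finally have "c \<in> M" unfolding M_def line_points_def L L' by force
  then have "Inf M = c" using low by (intro cInf_eq_minimum)
  then show ?thesis unfolding line_dist_def M_def c_def n_def z_def L L' by simp
qed

lemma prod5:
  fixes abc abd abe acd ace ade bcd bce bde cde :: real
  assumes "abc \<noteq> 0" "abd \<noteq> 0" "abe \<noteq> 0" "acd \<noteq> 0" "ace \<noteq> 0" "ade \<noteq> 0"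
    "bcd \<noteq> 0" "bce \<noteq> 0" "bde \<noteq> 0" "cde \<noteq> 0"
  shows "bcd*acd*abd*abc > 0 \<or> bce*ace*abe*abc > 0 \<or> bde*ade*abe*abd > 0 \<or>
         cde*ade*ace*acd > 0 \<or> cde*bde*bce*bcd > 0"
proof (rule ccontr)
  assume "\<not> ?thesis"
  moreover have "bcd*acd*abd*abc \<noteq> 0" "bce*ace*abe*abc \<noteq> 0" "bde*ade*abe*abd \<noteq> 0"
     "cde*ade*ace*acd \<noteq> 0" "cde*bde*bce*bcd \<noteq> 0" using assms by simp_all
  ultimately have n: "bcd*acd*abd*abc < 0" "bce*ace*abe*abc < 0" "bde*ade*abe*abd < 0"
     "cde*ade*ace*acd < 0" "cde*bde*bce*bcd < 0" by linarith+
  have "(bcd*acd*abd*abc) * (bce*ace*abe*abc) > 0" using n(1,2) by (rule mult_neg_neg)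
  then have "(bcd*acd*abd*abc) * (bce*ace*abe*abc) * (bde*ade*abe*abd) < 0"
    using n(3) by (rule mult_pos_neg)
  then have "(bcd*acd*abd*abc) * (bce*ace*abe*abc) * (bde*ade*abe*abd) * (cde*ade*ace*acd) > 0"
    using n(4) by (rule mult_neg_neg)
  then have "(bcd*acd*abd*abc) * (bce*ace*abe*abc) * (bde*ade*abe*abd) * (cde*ade*ace*acd) * (cde*bde*bce*bcd) < 0"
    using n(5) by (rule mult_pos_neg)
  moreover have "(bcd*acd*abd*abc) * (bce*ace*abe*abc) * (bde*ade*abe*abd) * (cde*ade*ace*acd) * (cde*bde*bce*bcd)
     = (abc*abd*abe*acd*ace*ade*bcd*bce*bde*cde)^2" by (simp add: power2_eq_square mult_ac)
  ultimately show False by (metis not_less zero_le_power2)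
qed

locale five_setup =
  fixes V W :: "nat \<Rightarrow> real^3" and T :: "nat set" and s :: real
  assumes nz: "\<And>i j. i \<in> T \<Longrightarrow> j \<in> T \<Longrightarrow> i \<noteq> j \<Longrightarrow> cross3 (V i) (V j) \<noteq> 0"
    and EK: "\<And>i j. i \<in> T \<Longrightarrow> j \<in> T \<Longrightarrow> i \<noteq> j \<Longrightarrow>
       cross3 (V i) (V j) \<bullet> (W i - W j) = s * norm (cross3 (V i) (V j))"
    and s0: "s \<noteq> 0"
begin

lemma H:
  assumes "i \<in> T" "j \<in> T" "k \<in> T" "l \<in> T" "distinct [i,j,k,l]"
    and dep: "k1 *\<^sub>R V i + k2 *\<^sub>R V j + k3 *\<^sub>R V k + k4 *\<^sub>R V l = 0"
  shows "k1*k2*norm (cross3 (V i) (V j)) + k1*k3*norm (cross3 (V i) (V k)) + k1*k4*norm (cross3 (V i) (V l))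
       + k2*k3*norm (cross3 (V j) (V k)) + k2*k4*norm (cross3 (V j) (V l)) + k3*k4*norm (cross3 (V k) (V l)) = 0"
proof -
  have p: "k1*k2*(cross3 (V i) (V j) \<bullet> (W i - W j)) + k1*k3*(cross3 (V i) (V k) \<bullet> (W i - W k))
    + k1*k4*(cross3 (V i) (V l) \<bullet> (W i - W l)) + k2*k3*(cross3 (V j) (V k) \<bullet> (W j - W k))
    + k2*k4*(cross3 (V j) (V l) \<bullet> (W j - W l)) + k3*k4*(cross3 (V k) (V l) \<bullet> (W k - W l)) = 0"
    by (rule plucker[OF dep])
  have "s * (k1*k2*norm (cross3 (V i) (V j)) + k1*k3*norm (cross3 (V i) (V k)) + k1*k4*norm (cross3 (V i) (V l))
       + k2*k3*norm (cross3 (V j) (V k)) + k2*k4*norm (cross3 (V j) (V l)) + k3*k4*norm (cross3 (V k) (V l))) = 0"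
  proof -
    have e: "cross3 (V i) (V j) \<bullet> (W i - W j) = s * norm (cross3 (V i) (V j))"
      "cross3 (V i) (V k) \<bullet> (W i - W k) = s * norm (cross3 (V i) (V k))"
      "cross3 (V i) (V l) \<bullet> (W i - W l) = s * norm (cross3 (V i) (V l))"
      "cross3 (V j) (V k) \<bullet> (W j - W k) = s * norm (cross3 (V j) (V k))"
      "cross3 (V j) (V l) \<bullet> (W j - W l) = s * norm (cross3 (V j) (V l))"
      "cross3 (V k) (V l) \<bullet> (W k - W l) = s * norm (cross3 (V k) (V l))"
      using assms(1-5) by (auto intro!: EK)
    from p[unfolded e] show ?thesis by (simp add: algebra_simps)
  qed
  then show ?thesis using s0 by simp
qed

lemma tri:
  assumes "i \<in> T" "j \<in> T" "k \<in> T" "l \<in> T" "distinct [i,j,k,l]"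
    and d0: "det3 (V i) (V j) (V k) = 0"
  shows False
proof -
  define n where "n = cross3 (V i) (V j)"
  have n0: "n \<noteq> 0" using nz assms unfolding n_def by simp
  have g: "det3 (V j) (V k) n *\<^sub>R V i - det3 (V i) (V k) n *\<^sub>R V j + det3 (V i) (V j) n *\<^sub>R V k
     - det3 (V i) (V j) (V k) *\<^sub>R n = 0" by (rule gp4)
  have dn: "det3 (V i) (V j) n = n \<bullet> n" unfolding det3_def n_def by simp
  have dep: "det3 (V j) (V k) n *\<^sub>R V i + (- det3 (V i) (V k) n) *\<^sub>R V j + (n \<bullet> n) *\<^sub>R V k + 0 *\<^sub>R V l = 0"
    using g d0 dn by simp
  from H[OF assms(1-5) dep] have
    "det3 (V j) (V k) n * (- det3 (V i) (V k) n) * norm (cross3 (V i) (V j))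
     + det3 (V j) (V k) n * (n \<bullet> n) * norm (cross3 (V i) (V k))
     + (- det3 (V i) (V k) n) * (n \<bullet> n) * norm (cross3 (V j) (V k)) = 0" by simp
  moreover have "det3 (V j) (V k) n *\<^sub>R V i + (- det3 (V i) (V k) n) *\<^sub>R V j + (n \<bullet> n) *\<^sub>R V k = 0"
    using dep by simp
  note F3[OF this]
  moreover have "cross3 (V i) (V j) \<noteq> 0" "cross3 (V i) (V k) \<noteq> 0" "cross3 (V j) (V k) \<noteq> 0"
    using nz assms by auto
  moreover have "n \<bullet> n \<noteq> 0" using n0 by simp
  ultimately show False by blast
qed

lemma quad:
  assumes "i \<in> T" "j \<in> T" "k \<in> T" "l \<in> T" "distinct [i,j,k,l]"
    and pos: "det3 (V j) (V k) (V l) * det3 (V i) (V k) (V l) * det3 (V i) (V j) (V l) * det3 (V i) (V j) (V k) > 0"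
  shows False
proof -
  have g: "det3 (V j) (V k) (V l) *\<^sub>R V i - det3 (V i) (V k) (V l) *\<^sub>R V j + det3 (V i) (V j) (V l) *\<^sub>R V k
     - det3 (V i) (V j) (V k) *\<^sub>R V l = 0" by (rule gp4)
  have dep: "det3 (V j) (V k) (V l) *\<^sub>R V i + (- det3 (V i) (V k) (V l)) *\<^sub>R V j + det3 (V i) (V j) (V l) *\<^sub>R V k
     + (- det3 (V i) (V j) (V k)) *\<^sub>R V l = 0" using g by simp
  have pr: "det3 (V j) (V k) (V l) * (- det3 (V i) (V k) (V l)) * det3 (V i) (V j) (V l) * (- det3 (V i) (V j) (V k)) > 0"
    using pos by simp
  have "cross3 (V i) (V j) \<noteq> 0" "cross3 (V i) (V k) \<noteq> 0" "cross3 (V i) (V l) \<noteq> 0"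
       "cross3 (V j) (V k) \<noteq> 0" "cross3 (V j) (V l) \<noteq> 0" "cross3 (V k) (V l) \<noteq> 0"
    using nz assms by auto
  from F4[OF dep this pr] H[OF assms(1-5) dep] show False by simp
qed

lemma five:
  assumes T: "a \<in> T" "b \<in> T" "c \<in> T" "d \<in> T" "e \<in> T" and dist: "distinct [a,b,c,d,e]"
  shows False
proof -
  let ?D = "\<lambda>x y z. det3 (V x) (V y) (V z)"
  have nzD: "?D a b c \<noteq> 0" "?D a b d \<noteq> 0" "?D a b e \<noteq> 0" "?D a c d \<noteq> 0" "?D a c e \<noteq> 0"
     "?D a d e \<noteq> 0" "?D b c d \<noteq> 0" "?D b c e \<noteq> 0" "?D b d e \<noteq> 0" "?D c d e \<noteq> 0"
  proof -
    show "?D a b c \<noteq> 0" using tri[of a b c d] T dist by auto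
    show "?D a b d \<noteq> 0" using tri[of a b d c] T dist by auto
    show "?D a b e \<noteq> 0" using tri[of a b e c] T dist by auto
    show "?D a c d \<noteq> 0" using tri[of a c d b] T dist by auto
    show "?D a c e \<noteq> 0" using tri[of a c e b] T dist by auto
    show "?D a d e \<noteq> 0" using tri[of a d e b] T dist by auto
    show "?D b c d \<noteq> 0" using tri[of b c d a] T dist by auto
    show "?D b c e \<noteq> 0" using tri[of b c e a] T dist by auto
    show "?D b d e \<noteq> 0" using tri[of b d e a] T dist by auto
    show "?D c d e \<noteq> 0" using tri[of c d e a] T dist by auto
  qed
  from prod5[OF nzD] show False
  proof (elim disjE)
    assume "?D b c d * ?D a c d * ?D a b d * ?D a b c > 0"
    then show False using quad[of a b c d] T dist by auto
  next
    assume "?D b c e * ?D a c e * ?D a b e * ?D a b c > 0"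
    then show False using quad[of a b c e] T dist by auto
  next
    assume "?D b d e * ?D a d e * ?D a b e * ?D a b d > 0"
    then show False using quad[of a b d e] T dist by auto
  next
    assume "?D c d e * ?D a d e * ?D a c e * ?D a c d > 0"
    then show False using quad[of a c d e] T dist by auto
  next
    assume "?D c d e * ?D b d e * ?D b c e * ?D b c d > 0"
    then show False using quad[of b c d e] T dist by auto
  qed
qed

end

lemma EK_pair:
  assumes dl: "is_dline L" and nc: "\<not> coplanar_lines L L'" and d1: "line_dist L L' = 1"
    and ch: "chirality L L' = s"
  shows "cross3 (fst L) (fst L') \<bullet> (snd L - snd L') = s * norm (cross3 (fst L) (fst L'))"
proof -
  have n0: "cross3 (fst L) (fst L') \<noteq> 0" by (rule noncop_cross[OF dl nc])
  have "\<bar>cross3 (fst L) (fst L') \<bullet> (snd L - snd L')\<bar> = norm (cross3 (fst L) (fst L'))"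
    using line_dist_formula[OF n0] d1 n0 by (simp add: divide_eq_1_iff)
  moreover have "sgn (cross3 (fst L) (fst L') \<bullet> (snd L - snd L')) = s"
    using ch by (simp add: chirality_def)
  ultimately show ?thesis by (metis sgn_mult_abs)
qed

theorem theorem2:
  fixes n :: nat and L :: "nat \<Rightarrow> dline"
  assumes dl: "\<And>i. i \<in> {1..n} \<Longrightarrow> is_dline (L i)"
    and skew: "\<And>i j. i \<in> {1..n} \<Longrightarrow> j \<in> {1..n} \<Longrightarrow> i \<noteq> j \<Longrightarrow> \<not> coplanar_lines (L i) (L j)"
    and dist1: "\<And>i j. 1 \<le> i \<Longrightarrow> i < j \<Longrightarrow> j \<le> n \<Longrightarrow> line_dist (L i) (L j) = 1"
  shows "\<not> (\<exists>S \<subseteq> {1..n}. card S = 5 \<and> (\<exists>s \<in> {-1, 1}.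
            \<forall>i \<in> S. \<forall>j \<in> S. i < j \<longrightarrow> chirality (L i) (L j) = s))"
proof
  assume "\<exists>S \<subseteq> {1..n}. card S = 5 \<and> (\<exists>s \<in> {-1, 1}.
            \<forall>i \<in> S. \<forall>j \<in> S. i < j \<longrightarrow> chirality (L i) (L j) = s)"
  then obtain S s where Sn: "S \<subseteq> {1..n}" and cS: "card S = 5" and s: "s \<in> {-1, 1}"
    and ch: "\<And>i j. i \<in> S \<Longrightarrow> j \<in> S \<Longrightarrow> i < j \<Longrightarrow> chirality (L i) (L j) = s" by blast
  have s0: "s \<noteq> 0" using s by auto
  have lt: "cross3 (fst (L i)) (fst (L j)) \<bullet> (snd (L i) - snd (L j)) = s * norm (cross3 (fst (L i)) (fst (L j)))"
    if "i \<in> S" "j \<in> S" "i < j" for i j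
  proof (rule EK_pair)
    have ij: "i \<in> {1..n}" "j \<in> {1..n}" using Sn that by auto
    show "is_dline (L i)" using dl ij by auto
    show "\<not> coplanar_lines (L i) (L j)" using skew[OF ij] that by auto
    show "line_dist (L i) (L j) = 1" using dist1[of i j] ij that by auto
    show "chirality (L i) (L j) = s" using ch that by auto
  qed
  interpret F: five_setup "\<lambda>i. fst (L i)" "\<lambda>i. snd (L i)" S s
  proof
    fix i j assume ij: "i \<in> S" "j \<in> S" "i \<noteq> j"
    show "cross3 (fst (L i)) (fst (L j)) \<noteq> 0"
    proof -
      have ij': "i \<in> {1..n}" "j \<in> {1..n}" using Sn ij by auto
      show ?thesis using noncop_cross[of "L i" "L j"] dl[OF ij'(1)] skew[OF ij' ij(3)] by auto
    qed
    show "cross3 (fst (L i)) (fst (L j)) \<bullet> (snd (L i) - snd (L j)) = s * norm (cross3 (fst (L i)) (fst (L j)))"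
    proof (cases "i < j")
      case True then show ?thesis using lt ij by auto
    next
      case False
      then have "j < i" using ij by auto
      then have h: "cross3 (fst (L j)) (fst (L i)) \<bullet> (snd (L j) - snd (L i)) = s * norm (cross3 (fst (L j)) (fst (L i)))"
        using lt ij by auto
      have "cross3 (fst (L i)) (fst (L j)) \<bullet> (snd (L i) - snd (L j)) = cross3 (fst (L j)) (fst (L i)) \<bullet> (snd (L j) - snd (L i))"
        by (subst cross_skew) (simp add: inner_diff_right)
      then show ?thesis using h nc_sym by metis
    qed
  next
    show "s \<noteq> 0" by (rule s0)
  qed
  have fin: "finite S" using cS by (metis card.infinite zero_neq_numeral)
  obtain xs where xs: "set xs = S" "distinct xs" using finite_distinct_list[OF fin] by blast
  have "length xs = 5" using xs cS distinct_card by fastforce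
  then obtain a b c d e where "xs = [a,b,c,d,e]"
    by (auto simp: length_Suc_conv numeral_eq_Suc)
  with xs show False using F.five[of a b c d e] by auto
qed

end
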